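(* Let $\Gamma$ be finite. For every directed edge $\epsilon\in\vec E$, as operators on $\mathcal H$, $$[\ell(\epsilon),JX_\epsilon J]=-\frac{1}{\sqrt[4]{\mu(s(\epsilon))^3\mu(t(\epsilon))}}\,|s(\epsilon)\rangle\langle t(\epsilon)|,$$ and $[\ell(\epsilon),JX_{\epsilon'}J]=0$ whenever $\epsilon'\in\vec E$, $\epsilon'\neq\epsilon$.
   Context: $\Gamma$ is a finite connected undirected graph (loops, multiple edges allowed), vertex set $V$, weighting $\mu:V\to(0,\infty)$. Directed version $\vec\Gamma$: each edge with distinct endpoints $\alpha\ne\beta$ yields $\epsilon,\epsilon^{op}$ with $s(\epsilon)=t(\epsilon^{op})=\alpha$, $t(\epsilon)=s(\epsilon^{op})=\beta$; each loop yields one directed loop $\epsilon=\epsilon^{op}$. $\mathcal C=C_0(V)$, $p_\alpha$ indicator of $\alpha$; $\mathcal X$ the Hilbert $\mathcal C$-$\mathcal C$ bimodule spanned by directed edges with $p_\alpha\epsilon=\delta_{s(\epsilon),\alpha}\epsilon$, $\epsilon p_\alpha=\delta_{t(\epsilon),\alpha}\epsilon$, $\langle\epsilon'|\epsilon\rangle=\delta_{\epsilon,\epsilon'}p_{t(\epsilon)}$; $\mathcal F(\mathcal X)$ its full Fock space with creation operators $\ell(\xi)$. For a loop $e$: $X_e=\ell(\epsilon)+\ell(\epsilon)^*$; for $e$ with endpoints $\alpha\ne\beta$: $a_\epsilon=(\mu(\alpha)/\mu(\beta))^{1/4}$, $X_e=a_\epsilon\ell(\epsilon)+a_\epsilon^{-1}\ell(\epsilon^{op})^*+a_\epsilon^{-1}\ell(\epsilon^{op})+a_\epsilon\ell(\epsilon)^*$;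 $X_\epsilon=p_{s(\epsilon)}X_ep_{t(\epsilon)}$. $\mathcal S(\Gamma,\mu)$ is the C$^*$-algebra generated by $\mathcal C$ and the $X_e$; $\mathrm{Tr}=\mathrm{tr}\circ E$ with $E(x)=PxP$, $\mathrm{tr}(p_v)=\mu(v)$. $\mathcal H=L^2(\mathcal S(\Gamma,\mu),\mathrm{Tr})\cong\mathcal F(\mathcal X)\otimes_{\mathcal C}\ell^2(V,\mu)$, with inner product linear in the right variable. $\mathcal H$ has an orthogonal spanning set consisting of the vertices $\gamma\in V$ (the vectors $\widehat{p_\gamma}$, paths of length 0) and the paths $\epsilon_1\cdots\epsilon_n$ in $\vec\Gamma$ ($t(\epsilon_k)=s(\epsilon_{k+1})$), with $\|\gamma\|=\sqrt{\mu(\gamma)}$, $\|\epsilon_1\cdots\epsilon_n\|=\sqrt{\mu(t(\epsilon_n))}$. The operator $\ell(\epsilon)$ acts by $\ell(\epsilon)\gamma=\delta_{t(\epsilon),\gamma}\epsilon$ and $\ell(\epsilon)(\epsilon_1\cdots\epsilon_n)=\epsilon\epsilon_1\cdots\epsilon_n$ if $t(\epsilon)=s(\epsilon_1)$ and $0$ otherwise; $\mathcal S(\Gamma,\mu)$ acts on $\mathcal H$ by left multiplication. $J$ is the modular conjugation, the antilinear isometry extending $\hat x\mapsto\widehat{x^*}$; concretely $J\gamma=\gamma$ and $J(\epsilon_1\cdots\epsilon_n)=\sqrt{\mu(t(\epsilon_n))/\mu(s(\epsilon_1))}\,\epsilon_n^{op}\cdots\epsilon_1^{op}$. For $\xi,\eta\in\mathcal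 H$, $|\xi\rangle\langle\eta|$ is the rank-one operator $\zeta\mapsto\xi\langle\eta|\zeta\rangle_{\mathcal H}$; vertices $s(\epsilon),t(\epsilon)$ are regarded as vectors in $\mathcal H$. *)

theory Defs
  imports Complex_Main
begin

text \<open>
  Concrete model of the Hilbert space H = L^2(S(Gamma,mu),Tr) via its orthogonal spanning set:
  vertices (V gamma) and paths (P [e1,...,en]) in the directed graph.
  Vectors are finitely supported coefficient functions with respect to this orthogonal
  spanning set (this is the dense span; all operators involved are bounded).
\<close>

datatype ('v,'e) hb = V 'v | P "'e list"

definition is_dpath :: "('e \<Rightarrow> 'v) \<Rightarrow> ('e \<Rightarrow> 'v) \<Rightarrow> 'e list \<Rightarrow> bool" where
  "is_dpath s t es \<longleftrightarrow> es \<noteq> [] \<and> (\<forall>k. Suc k < length es \<longrightarrow> t (es ! k) = s (es ! Suc k))"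

fun hb_ok :: "('e \<Rightarrow> 'v) \<Rightarrow> ('e \<Rightarrow> 'v) \<Rightarrow> ('v,'e) hb \<Rightarrow> bool" where
  "hb_ok s t (V v) = True"
| "hb_ok s t (P es) = is_dpath s t es"

type_synonym ('v,'e) vec = "('v,'e) hb \<Rightarrow> complex"
type_synonym ('v,'e) op = "('v,'e) vec \<Rightarrow> ('v,'e) vec"

definition in_H :: "('e \<Rightarrow> 'v) \<Rightarrow> ('e \<Rightarrow> 'v) \<Rightarrow> ('v,'e) vec \<Rightarrow> bool" where
  "in_H s t x \<longleftrightarrow> finite {b. x b \<noteq> 0} \<and> (\<forall>b. x b \<noteq> 0 \<longrightarrow> hb_ok s t b)"

text \<open>Squared norms of the spanning vectors.\<close>
fun wt :: "('v \<Rightarrow> real) \<Rightarrow> ('e \<Rightarrow> 'v) \<Rightarrow> ('v,'e) hb \<Rightarrow> real" where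
  "wt mu t (V v) = mu v"
| "wt mu t (P es) = mu (t (last es))"

definition hinner :: "('v \<Rightarrow> real) \<Rightarrow> ('e \<Rightarrow> 'v) \<Rightarrow> ('v,'e) vec \<Rightarrow> ('v,'e) vec \<Rightarrow> complex" where
  "hinner mu t x y = (\<Sum>b\<in>{b. x b \<noteq> 0}. cnj (x b) * y b * complex_of_real (wt mu t b))"

definition bv :: "('v,'e) hb \<Rightarrow> ('v,'e) vec" where
  "bv b = (\<lambda>c. if c = b then 1 else 0)"

definition lin_ext :: "(('v,'e) hb \<Rightarrow> ('v,'e) vec) \<Rightarrow> ('v,'e) op" where
  "lin_ext f x = (\<lambda>c. \<Sum>b\<in>{b. x b \<noteq> 0}. x b * f b c)"

definition alin_ext :: "(('v,'e) hb \<Rightarrow> ('v,'e) vec) \<Rightarrow> ('v,'e) op" where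
  "alin_ext f x = (\<lambda>c. \<Sum>b\<in>{b. x b \<noteq> 0}. cnj (x b) * f b c)"

fun ell_b :: "('e \<Rightarrow> 'v) \<Rightarrow> ('e \<Rightarrow> 'v) \<Rightarrow> 'e \<Rightarrow> ('v,'e) hb \<Rightarrow> ('v,'e) vec" where
  "ell_b s t e (V g) = (if t e = g then bv (P [e]) else (\<lambda>_. 0))"
| "ell_b s t e (P es) = (if es \<noteq> [] \<and> t e = s (hd es) then bv (P (e # es)) else (\<lambda>_. 0))"

definition ell :: "('e \<Rightarrow> 'v) \<Rightarrow> ('e \<Rightarrow> 'v) \<Rightarrow> 'e \<Rightarrow> ('v,'e) op" where
  "ell s t e = lin_ext (ell_b s t e)"

fun ellstar_b :: "('e \<Rightarrow> 'v) \<Rightarrow> 'e \<Rightarrow> ('v,'e) hb \<Rightarrow> ('v,'e) vec" where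
  "ellstar_b t e (V g) = (\<lambda>_. 0)"
| "ellstar_b t e (P es) = (if es \<noteq> [] \<and> hd es = e then
      (if tl es = [] then bv (V (t e)) else bv (P (tl es))) else (\<lambda>_. 0))"

definition ellstar :: "('e \<Rightarrow> 'v) \<Rightarrow> 'e \<Rightarrow> ('v,'e) op" where
  "ellstar t e = lin_ext (ellstar_b t e)"

fun proj_b :: "('e \<Rightarrow> 'v) \<Rightarrow> 'v \<Rightarrow> ('v,'e) hb \<Rightarrow> ('v,'e) vec" where
  "proj_b s a (V g) = (if g = a then bv (V g) else (\<lambda>_. 0))"
| "proj_b s a (P es) = (if es \<noteq> [] \<and> s (hd es) = a then bv (P es) else (\<lambda>_. 0))"

definition proj :: "('e \<Rightarrow> 'v) \<Rightarrow> 'v \<Rightarrow> ('v,'e) op" where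
  "proj s a = lin_ext (proj_b s a)"

fun J_b :: "('v \<Rightarrow> real) \<Rightarrow> ('e \<Rightarrow> 'v) \<Rightarrow> ('e \<Rightarrow> 'v) \<Rightarrow> ('e \<Rightarrow> 'e) \<Rightarrow> ('v,'e) hb \<Rightarrow> ('v,'e) vec" where
  "J_b mu s t opp (V g) = bv (V g)"
| "J_b mu s t opp (P es) =
     (\<lambda>c. complex_of_real (sqrt (mu (t (last es)) / mu (s (hd es)))) * bv (P (rev (map opp es))) c)"

definition Jop :: "('v \<Rightarrow> real) \<Rightarrow> ('e \<Rightarrow> 'v) \<Rightarrow> ('e \<Rightarrow> 'v) \<Rightarrow> ('e \<Rightarrow> 'e) \<Rightarrow> ('v,'e) op" where
  "Jop mu s t opp = alin_ext (J_b mu s t opp)"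

definition a_coef :: "('v \<Rightarrow> real) \<Rightarrow> ('e \<Rightarrow> 'v) \<Rightarrow> ('e \<Rightarrow> 'v) \<Rightarrow> 'e \<Rightarrow> real" where
  "a_coef mu s t e = (mu (s e) / mu (t e)) powr (1/4)"

definition X_und :: "('v \<Rightarrow> real) \<Rightarrow> ('e \<Rightarrow> 'v) \<Rightarrow> ('e \<Rightarrow> 'v) \<Rightarrow> ('e \<Rightarrow> 'e) \<Rightarrow> 'e \<Rightarrow> ('v,'e) op" where
  "X_und mu s t opp e x =
     (if s e = t e then (\<lambda>c. ell s t e x c + ellstar t e x c)
      else (let a = complex_of_real (a_coef mu s t e) in
        (\<lambda>c. a * ell s t e x c + inverse a * ellstar t (opp e) x c
             + inverse a * ell s t (opp e) x c + a * ellstar t e x c)))"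

definition X_dir :: "('v \<Rightarrow> real) \<Rightarrow> ('e \<Rightarrow> 'v) \<Rightarrow> ('e \<Rightarrow> 'v) \<Rightarrow> ('e \<Rightarrow> 'e) \<Rightarrow> 'e \<Rightarrow> ('v,'e) op" where
  "X_dir mu s t opp e = proj s (s e) \<circ> X_und mu s t opp e \<circ> proj s (t e)"

definition commutator :: "('v,'e) op \<Rightarrow> ('v,'e) op \<Rightarrow> ('v,'e) op" where
  "commutator A B x = (\<lambda>c. A (B x) c - B (A x) c)"

definition rank_one :: "('v \<Rightarrow> real) \<Rightarrow> ('e \<Rightarrow> 'v) \<Rightarrow> ('v,'e) vec \<Rightarrow> ('v,'e) vec \<Rightarrow> ('v,'e) op" where
  "rank_one mu t xi eta z = (\<lambda>c. xi c * hinner mu t eta z)"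

end

theory Submission
  imports Defs
begin


definition supp :: "('v,'e) vec \<Rightarrow> ('v,'e) hb set" where "supp x = {b. x b \<noteq> 0}"

lemma lin_ext_pt:
  assumes "finite (supp x)" "\<And>b. f b c \<noteq> 0 \<Longrightarrow> b = bz"
  shows "lin_ext f x c = x bz * f bz c"
proof -
  have "lin_ext f x c = (\<Sum>b\<in>supp x. x b * f b c)" by (simp add: lin_ext_def supp_def)
  also have "\<dots> = (\<Sum>b\<in>supp x. if b = bz then x bz * f bz c else 0)"
    by (rule sum.cong) (auto dest: assms(2))
  also have "\<dots> = x bz * f bz c" using assms(1) by (auto simp: supp_def)
  finally show ?thesis .
qed

lemma alin_ext_pt:
  assumes "finite (supp x)" "\<And>b. f b c \<noteq> 0 \<Longrightarrow> b = bz"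
  shows "alin_ext f x c = cnj (x bz) * f bz c"
proof -
  have "alin_ext f x c = (\<Sum>b\<in>supp x. cnj (x b) * f b c)" by (simp add: alin_ext_def supp_def)
  also have "\<dots> = (\<Sum>b\<in>supp x. if b = bz then cnj (x bz) * f bz c else 0)"
    by (rule sum.cong) (auto dest: assms(2))
  also have "\<dots> = cnj (x bz) * f bz c" using assms(1) by (auto simp: supp_def)
  finally show ?thesis .
qed

lemma lin_ext_fin:
  assumes "finite (supp x)" "\<And>b. finite (supp (f b))"
  shows "finite (supp (lin_ext f x))"
proof -
  have "supp (lin_ext f x) \<subseteq> (\<Union>b\<in>supp x. supp (f b))"
  proof
    fix c assume "c \<in> supp (lin_ext f x)"
    then have "(\<Sum>b\<in>{b. x b \<noteq> 0}. x b * f b c) \<noteq> 0" by (simp add: supp_def lin_ext_def)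
    then obtain b where "b \<in> {b. x b \<noteq> 0}" "x b * f b c \<noteq> 0" by (rule sum.not_neutral_contains_not_neutral)
    then show "c \<in> (\<Union>b\<in>supp x. supp (f b))" by (auto simp: supp_def)
  qed
  moreover have "finite (\<Union>b\<in>supp x. supp (f b))" using assms by blast
  ultimately show ?thesis by (rule finite_subset)
qed

lemma alin_ext_fin:
  assumes "finite (supp x)" "\<And>b. finite (supp (f b))"
  shows "finite (supp (alin_ext f x))"
proof -
  have "supp (alin_ext f x) \<subseteq> (\<Union>b\<in>supp x. supp (f b))"
  proof
    fix c assume "c \<in> supp (alin_ext f x)"
    then have "(\<Sum>b\<in>{b. x b \<noteq> 0}. cnj (x b) * f b c) \<noteq> 0" by (simp add: supp_def alin_ext_def)
    then obtain b where "b \<in> {b. x b \<noteq> 0}" "cnj (x b) * f b c \<noteq> 0" by (rule sum.not_neutral_contains_not_neutral)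
    then show "c \<in> (\<Union>b\<in>supp x. supp (f b))" by (auto simp: supp_def)
  qed
  moreover have "finite (\<Union>b\<in>supp x. supp (f b))" using assms by blast
  ultimately show ?thesis by (rule finite_subset)
qed

lemma supp_bv[simp]: "supp (bv b) = {b}" by (auto simp: supp_def bv_def)
lemma supp_0[simp]: "supp (\<lambda>_. 0) = {}" by (auto simp: supp_def)
lemma fin_scale: "finite (supp y) \<Longrightarrow> finite (supp (\<lambda>c. a * y c))"
  by (rule finite_subset[of _ "supp y"]) (auto simp: supp_def)

lemma fin_ell: "finite (supp x) \<Longrightarrow> finite (supp (ell s t e x))"
  unfolding ell_def apply (rule lin_ext_fin, assumption)
  subgoal for b by (cases b) auto done
lemma fin_ellstar: "finite (supp x) \<Longrightarrow> finite (supp (ellstar t e x))"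
  unfolding ellstar_def apply (rule lin_ext_fin, assumption)
  subgoal for b by (cases b) auto done
lemma fin_proj: "finite (supp x) \<Longrightarrow> finite (supp (proj s a x))"
  unfolding proj_def apply (rule lin_ext_fin, assumption)
  subgoal for b by (cases b) auto done
lemma fin_J: "finite (supp x) \<Longrightarrow> finite (supp (Jop mu s t opp x))"
  unfolding Jop_def apply (rule alin_ext_fin, assumption)
  subgoal for b by (cases b) (auto intro: fin_scale) done
lemma fin_add: "finite (supp x) \<Longrightarrow> finite (supp y) \<Longrightarrow> finite (supp (\<lambda>c. x c + y c))"
  by (rule finite_subset[of _ "supp x \<union> supp y"]) (auto simp: supp_def)


lemma coef_real: assumes a: "(a::real) > 0" and b: "b > 0"
  shows "inverse ((a / b) powr (1/4)) * sqrt (b / a) = b * (1 / ((a ^ 3 * b) powr (1/4)))"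
proof -
  define x where "x = a powr (1/4)"
  define y where "y = b powr (1/4)"
  have xp: "x > 0" "y > 0" using a b by (auto simp: x_def y_def)
  have pw: "\<And>c::real. c > 0 \<Longrightarrow> (c powr (1/4)) ^ n = c powr (real n / 4)" for n
    by (simp add: powr_realpow[symmetric] powr_powr)
  have a4: "a = x ^ 4" using pw[OF a, of 4] a by (simp add: x_def)
  have b4: "b = y ^ 4" using pw[OF b, of 4] b by (simp add: y_def)
  have 1: "inverse ((a / b) powr (1/4)) = y / x"
    using a b by (simp add: powr_divide x_def y_def)
  have 2: "sqrt (b / a) = y ^ 2 / x ^ 2"
  proof -
    have "b / a = (y ^ 2 / x ^ 2) ^ 2" unfolding a4 b4 by (simp add: power_divide power_mult[symmetric])
    then show ?thesis using xp by simp
  qed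
  have 3: "(a ^ 3 * b) powr (1/4) = x ^ 3 * y"
  proof -
    have "a ^ 3 * b = (x ^ 3 * y) ^ 4" unfolding a4 b4 by (simp add: power_mult_distrib power_mult[symmetric])
    then have "(a ^ 3 * b) powr (1/4) = ((x ^ 3 * y) ^ 4) powr (1/4)" by simp
    also have "\<dots> = x ^ 3 * y"
    proof -
      have z: "x ^ 3 * y > 0" using xp by simp
      have e: "(x ^ 3 * y) ^ 4 = (x ^ 3 * y) powr 4" using z by simp
      show ?thesis unfolding e powr_powr using z by simp
    qed
    finally show ?thesis .
  qed
  show ?thesis unfolding 1 2 3 using xp b4 by (simp add: field_simps power_def)
qed

locale G =
  fixes s t :: "'e \<Rightarrow> 'v" and opp :: "'e \<Rightarrow> 'e" and mu :: "'v \<Rightarrow> real"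
  assumes opp_inv: "\<And>e. opp (opp e) = e"
    and opp_s: "\<And>e. s (opp e) = t e" and opp_t: "\<And>e. t (opp e) = s e"
    and opp_fix: "\<And>e. opp e = e \<longleftrightarrow> s e = t e"
    and mu_pos: "\<And>v. mu v > 0"
begin

lemma ell_V: "finite (supp x) \<Longrightarrow> ell s t e x (V g) = 0"
  unfolding ell_def apply (subst lin_ext_pt[where bz="V g"]) apply assumption
  subgoal for b by (cases b) (auto simp: bv_def split: if_splits)
  by (simp add: bv_def)
lemma ell_Nil: "finite (supp x) \<Longrightarrow> ell s t e x (P []) = 0"
  unfolding ell_def apply (subst lin_ext_pt[where bz="V g"]) apply assumption
  subgoal for b by (cases b) (auto simp: bv_def split: if_splits)
  by (simp add: bv_def)
lemma ell_Cons: "finite (supp x) \<Longrightarrow> ell s t e x (P (f#es)) =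
   (if f = e then (if es = [] then x (V (t e)) else if t e = s (hd es) then x (P es) else 0) else 0)"
  unfolding ell_def apply (subst lin_ext_pt[where bz="if es = [] then V (t e) else P es"]) apply assumption
  subgoal for b by (cases b) (auto simp: bv_def split: if_splits)
  by (simp add: bv_def)
lemma ellstar_V: "finite (supp x) \<Longrightarrow> ellstar t e x (V g) = (if g = t e then x (P [e]) else 0)"
  unfolding ellstar_def apply (subst lin_ext_pt[where bz="P [e]"]) apply assumption
  subgoal for b apply (cases b) apply (auto simp: bv_def split: if_splits)
    by (metis list.collapse)
  by (simp add: bv_def)
lemma ellstar_P: "finite (supp x) \<Longrightarrow> ellstar t e x (P ys) = (if ys \<noteq> [] then x (P (e#ys)) else 0)"
  unfolding ellstar_def apply (subst lin_ext_pt[where bz="P (e#ys)"]) apply assumption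
  subgoal for b by (cases b) (auto simp: bv_def split: if_splits)
  by (simp add: bv_def)
lemma proj_V: "finite (supp x) \<Longrightarrow> proj s a x (V g) = (if g = a then x (V g) else 0)"
  unfolding proj_def apply (subst lin_ext_pt[where bz="V g"]) apply assumption
  subgoal for b by (cases b) (auto simp: bv_def split: if_splits)
  by (simp add: bv_def)
lemma proj_P: "finite (supp x) \<Longrightarrow> proj s a x (P es) = (if es \<noteq> [] \<and> s (hd es) = a then x (P es) else 0)"
  unfolding proj_def apply (subst lin_ext_pt[where bz="P es"]) apply assumption
  subgoal for b by (cases b) (auto simp: bv_def split: if_splits)
  by (simp add: bv_def)

lemma map_opp_opp[simp]: "map opp (map opp xs) = xs"
  by (induct xs) (auto simp: opp_inv)
lemma rev_map_opp2[simp]: "rev (map opp (rev (map opp xs))) = xs"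
  by (simp add: rev_map comp_def opp_inv)
lemma opp_loop: "s e = t e \<Longrightarrow> opp e = e" using opp_fix by blast

definition fc :: "'e list \<Rightarrow> complex" where
  "fc es = complex_of_real (sqrt (mu (t (last es)) / mu (s (hd es))))"

lemma J_V: "finite (supp x) \<Longrightarrow> Jop mu s t opp x (V g) = cnj (x (V g))"
  unfolding Jop_def apply (subst alin_ext_pt[where bz="V g"]) apply assumption
  subgoal for b by (cases b) (auto simp: bv_def split: if_splits)
  by (simp add: bv_def)
lemma J_P: "finite (supp x) \<Longrightarrow> Jop mu s t opp x (P ys) = cnj (x (P (rev (map opp ys)))) * fc (rev (map opp ys))"
  unfolding Jop_def apply (subst alin_ext_pt[where bz="P (rev (map opp ys))"]) apply assumption
  subgoal for b by (cases b) (auto simp: bv_def fc_def rev_map comp_def opp_inv split: if_splits)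
  by (simp add: bv_def fc_def rev_map comp_def opp_inv)


lemma dpath_succ: "is_dpath s t es \<longleftrightarrow> es \<noteq> [] \<and> successively (\<lambda>a b. t a = s b) es"
  by (simp add: is_dpath_def successively_conv_nth)

lemma inH_fin: "in_H s t y \<Longrightarrow> finite (supp y)" by (simp add: in_H_def supp_def)
lemma inH_Nil: "in_H s t y \<Longrightarrow> y (P []) = 0"
  by (auto simp: in_H_def is_dpath_def)
lemma inH_Cons2: "in_H s t y \<Longrightarrow> y (P (a # b # rest)) \<noteq> 0 \<Longrightarrow> t a = s b"
  unfolding in_H_def by (force simp: dpath_succ)
lemma inH_snoc: "in_H s t y \<Longrightarrow> y (P (ys @ [e])) \<noteq> 0 \<Longrightarrow> ys \<noteq> [] \<Longrightarrow> t (last ys) = s e"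
  unfolding in_H_def by (force simp: dpath_succ successively_append_iff)

lemma inH_ell: "in_H s t y \<Longrightarrow> in_H s t (ell s t e y)"
proof -
  assume h: "in_H s t y"
  have f: "finite (supp y)" using h by (rule inH_fin)
  show ?thesis unfolding in_H_def
  proof (intro conjI allI impI)
    show "finite {b. ell s t e y b \<noteq> 0}" using fin_ell[OF f] by (simp add: supp_def)
    fix b assume nz: "ell s t e y b \<noteq> 0"
    show "hb_ok s t b"
    proof (cases b)
      case (V g) then show ?thesis by simp
    next
      case (P ys)
      show ?thesis
      proof (cases ys)
        case Nil then show ?thesis using nz P ell_Nil[OF f] by simp
      next
        case (Cons f es)
        show ?thesis
        proof (cases es)
          case Nil then show ?thesis using P Cons by (simp add: dpath_succ)
        next
          case (Cons g rest)
          with nz P \<open>ys = f # es\<close> have "f = e" "t e = s g" "y (P es) \<noteq> 0"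
            by (auto simp: ell_Cons[OF f] split: if_splits)
          moreover have "hb_ok s t (P es)" using h \<open>y (P es) \<noteq> 0\<close> unfolding in_H_def by blast
          ultimately show ?thesis using P \<open>ys = f # es\<close> Cons by (simp add: dpath_succ)
        qed
      qed
    qed
  qed
qed

lemma dpath_rev: "is_dpath s t (rev (map opp es)) \<longleftrightarrow> is_dpath s t es"
  unfolding dpath_succ by (auto simp: successively_map opp_s opp_t elim: successively_mono)

lemma inH_J: "in_H s t y \<Longrightarrow> in_H s t (Jop mu s t opp y)"
proof -
  assume h: "in_H s t y"
  have f: "finite (supp y)" using h by (rule inH_fin)
  show ?thesis unfolding in_H_def
  proof (intro conjI allI impI)
    show "finite {b. Jop mu s t opp y b \<noteq> 0}" using fin_J[OF f] by (simp add: supp_def)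
    fix b assume nz: "Jop mu s t opp y b \<noteq> 0"
    show "hb_ok s t b"
    proof (cases b)
      case (V g) then show ?thesis by simp
    next
      case (P ys)
      then have "y (P (rev (map opp ys))) \<noteq> 0" using nz by (auto simp: J_P[OF f])
      then have "is_dpath s t (rev (map opp ys))" using h by (force simp: in_H_def)
      then show ?thesis using P dpath_rev by simp
    qed
  qed
qed

definition A :: "'e \<Rightarrow> complex" where "A e = complex_of_real (a_coef mu s t e)"
definition kk :: "'e \<Rightarrow> complex" where "kk e = complex_of_real (sqrt (mu (t e) / mu (s e)))"

lemma fin_X_und: "finite (supp y) \<Longrightarrow> finite (supp (X_und mu s t opp e y))"
  unfolding X_und_def Let_def
  by (auto intro!: fin_add fin_scale fin_ell fin_ellstar)

lemma a_loop: "s e = t e \<Longrightarrow> a_coef mu s t e = 1"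
  using mu_pos[of "s e"] by (simp add: a_coef_def)

lemma X_dir_eq: assumes h: "in_H s t y"
  shows "X_dir mu s t opp e y c = A e * ell s t e y c + inverse (A e) * ellstar t (opp e) y c"
proof -
  have f: "finite (supp y)" using h by (rule inH_fin)
  have f2: "finite (supp (proj s (t e) y))" by (rule fin_proj[OF f])
  have f3: "finite (supp (X_und mu s t opp e (proj s (t e) y)))" by (rule fin_X_und[OF f2])
  note pts = ell_V ell_Nil ell_Cons ellstar_V ellstar_P proj_V proj_P
  show ?thesis
  proof (cases c)
    case (V g)
    then show ?thesis
      by (cases "s e = t e") (auto simp: opp_loop X_dir_def pts f f2 f3 fin_add fin_scale fin_ell fin_ellstar X_und_def A_def a_loop opp_s opp_t opp_fix Let_def)
  next
    case (P ys)
    show ?thesis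
    proof (cases ys)
      case Nil then show ?thesis using P
        by (cases "s e = t e") (auto simp: opp_loop X_dir_def pts f f2 f3 fin_add fin_scale fin_ell fin_ellstar X_und_def A_def a_loop opp_s opp_t opp_fix Let_def inH_Nil[OF h])
    next
      case (Cons g es)
      have c2: "s g \<noteq> s e \<Longrightarrow> y (P (opp e # g # es)) = 0" using inH_Cons2[OF h, of "opp e" g es] opp_t by auto
      have c3: "s g \<noteq> t e \<Longrightarrow> y (P (e # g # es)) = 0" using inH_Cons2[OF h, of e g es] by auto
      show ?thesis
      proof (cases "s e = t e")
        case True
        have oe: "opp e = e" using True opp_fix by blast
        have c2': "s g \<noteq> s e \<Longrightarrow> y (P (e # g # es)) = 0" using c2 oe by simp
        show ?thesis using P Cons True c2' c3
          by (auto simp: oe X_dir_def pts f f2 f3 fin_add fin_scale fin_ell fin_ellstar X_und_def A_def a_loop Let_def)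
      next
        case False
        have oe: "opp e \<noteq> e" using False opp_fix by blast
        show ?thesis using P Cons False c2 c3 oe
          by (auto simp: X_dir_def pts f f2 f3 fin_add fin_scale fin_ell fin_ellstar X_und_def A_def opp_s opp_t Let_def)
      qed
    qed
  qed
qed


lemma sqrt_prod: "a > 0 \<Longrightarrow> sqrt (a / b) * sqrt (c / a) = sqrt (c / (b::real))"
  by (simp add: real_sqrt_mult[symmetric])

lemma RC_V: "finite (supp y) \<Longrightarrow> Jop mu s t opp (ell s t e (Jop mu s t opp y)) (V g) = 0"
  by (simp add: J_V ell_V fin_ell fin_J)
lemma RC_Nil: "finite (supp y) \<Longrightarrow> Jop mu s t opp (ell s t e (Jop mu s t opp y)) (P []) = 0"
  by (simp add: J_P ell_Nil fin_ell fin_J)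
lemma RC_snoc: assumes f: "finite (supp y)"
  shows "Jop mu s t opp (ell s t e (Jop mu s t opp y)) (P (bl @ [g])) =
    (if g = opp e then (if bl = [] then kk e * y (V (t e)) else if t e = t (last bl) then kk e * y (P bl) else 0) else 0)"
proof -
  have fJ: "finite (supp (Jop mu s t opp y))" by (rule fin_J[OF f])
  have fE: "finite (supp (ell s t e (Jop mu s t opp y)))" by (rule fin_ell[OF fJ])
  have e1: "opp g = e \<longleftrightarrow> g = opp e" using opp_inv by metis
  show ?thesis
  proof (cases "g = opp e")
    case False then show ?thesis using e1 by (simp add: J_P fE ell_Cons fJ)
  next
    case True
    show ?thesis
    proof (cases bl)
      case Nil then show ?thesis using True
        by (simp add: J_P fE ell_Cons fJ J_V f fc_def kk_def opp_s opp_t opp_inv)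
    next
      case (Cons b bs)
      have hdr: "hd (rev (map opp bl)) = opp (last bl)" using Cons by (simp add: hd_rev last_map)
      have lst: "last (rev (map opp bl)) = opp (hd bl)" using Cons by (simp add: last_rev hd_map)
      have sq: "t e = t (last bl) \<Longrightarrow> fc (e # rev (map opp bl)) * cnj (fc bl) = kk e"
      proof -
        assume te: "t e = t (last bl)"
        have "fc (e # rev (map opp bl)) * cnj (fc bl) =
          complex_of_real (sqrt (mu (s (hd bl)) / mu (s e)) * sqrt (mu (t (last bl)) / mu (s (hd bl))))"
          using Cons lst by (simp add: fc_def opp_t)
        also have "\<dots> = kk e" using mu_pos te by (simp add: sqrt_prod kk_def)
        finally show ?thesis .
      qed
      show ?thesis using True Cons hdr sq
        by (auto simp: J_P fE ell_Cons fJ f opp_s opp_inv mult.commute mult.left_commute)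
    qed
  qed
qed

lemma RA_V: assumes h: "in_H s t y"
  shows "Jop mu s t opp (ellstar t (opp e) (Jop mu s t opp y)) (V g) = (if g = s e then kk e * y (P [e]) else 0)"
proof -
  have f: "finite (supp y)" using h by (rule inH_fin)
  have fJ: "finite (supp (Jop mu s t opp y))" by (rule fin_J[OF f])
  have fE: "finite (supp (ellstar t (opp e) (Jop mu s t opp y)))" by (rule fin_ellstar[OF fJ])
  show ?thesis by (simp add: J_V fE ellstar_V fJ f J_P opp_inv opp_t fc_def kk_def mult.commute)
qed

lemma RA_P: assumes h: "in_H s t y"
  shows "Jop mu s t opp (ellstar t (opp e) (Jop mu s t opp y)) (P ys) = (if ys \<noteq> [] then kk e * y (P (ys @ [e])) else 0)"
proof -
  have f: "finite (supp y)" using h by (rule inH_fin)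
  have fJ: "finite (supp (Jop mu s t opp y))" by (rule fin_J[OF f])
  have fE: "finite (supp (ellstar t (opp e) (Jop mu s t opp y)))" by (rule fin_ellstar[OF fJ])
  show ?thesis
  proof (cases "ys = []")
    case True then show ?thesis by (simp add: J_P fE fJ ellstar_P)
  next
    case False
    have r: "rev (map opp (opp e # rev (map opp ys))) = ys @ [e]" by (simp add: opp_inv rev_map comp_def)
    have sq: "y (P (ys @ [e])) \<noteq> 0 \<Longrightarrow> cnj (fc (ys @ [e])) * fc (rev (map opp ys)) = kk e"
    proof -
      assume nz: "y (P (ys @ [e])) \<noteq> 0"
      have te: "t (last ys) = s e" by (rule inH_snoc[OF h nz False])
      have "cnj (fc (ys @ [e])) * fc (rev (map opp ys)) =
          complex_of_real (sqrt (mu (s (hd ys)) / mu (t (last ys))) * sqrt (mu (t e) / mu (s (hd ys))))"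
        using False by (simp add: fc_def opp_t opp_s hd_rev last_rev hd_map last_map mult.commute)
      also have "\<dots> = kk e" using mu_pos te by (simp add: sqrt_prod kk_def)
      finally show ?thesis .
    qed
    show ?thesis using False r sq
      by (auto simp: J_P fE ellstar_P fJ f mult.commute mult.left_commute)
  qed
qed


lemma RC_P: assumes f: "finite (supp y)"
  shows "Jop mu s t opp (ell s t e (Jop mu s t opp y)) (P ys) =
    (if ys \<noteq> [] \<and> last ys = opp e then (if butlast ys = [] then kk e * y (V (t e))
       else if t e = t (last (butlast ys)) then kk e * y (P (butlast ys)) else 0) else 0)"
proof (cases ys rule: rev_cases)
  case Nil then show ?thesis by (simp add: RC_Nil f)
next
  case (snoc bl g) then show ?thesis by (simp add: RC_snoc f)
qed

lemma J_lin: assumes "finite (supp u)" "finite (supp v)"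
  shows "Jop mu s t opp (\<lambda>c. a * u c + b * v c) c = cnj a * Jop mu s t opp u c + cnj b * Jop mu s t opp v c"
proof -
  have "finite (supp (\<lambda>c. a * u c + b * v c))" using assms by (intro fin_add fin_scale)
  then show ?thesis using assms by (cases c) (simp_all add: J_V J_P algebra_simps)
qed

lemma fin_R: "finite (supp y) \<Longrightarrow> finite (supp (Jop mu s t opp (X_dir mu s t opp e (Jop mu s t opp y))))"
  unfolding X_dir_def by (simp add: fin_J fin_proj fin_X_und)

lemma R_eq: assumes h: "in_H s t x"
  shows "Jop mu s t opp (X_dir mu s t opp e (Jop mu s t opp x)) c =
     A e * Jop mu s t opp (ell s t e (Jop mu s t opp x)) c + inverse (A e) * Jop mu s t opp (ellstar t (opp e) (Jop mu s t opp x)) c"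
proof -
  have hJ: "in_H s t (Jop mu s t opp x)" by (rule inH_J[OF h])
  have fJ: "finite (supp (Jop mu s t opp x))" by (rule inH_fin[OF hJ])
  have "X_dir mu s t opp e (Jop mu s t opp x) = (\<lambda>c. A e * ell s t e (Jop mu s t opp x) c + inverse (A e) * ellstar t (opp e) (Jop mu s t opp x) c)"
    using X_dir_eq[OF hJ] by blast
  then show ?thesis by (simp add: J_lin fin_ell fin_ellstar fJ A_def)
qed

lemma hd_butlast': "butlast es \<noteq> [] \<Longrightarrow> hd (butlast es) = hd es"
  by (cases es) auto

definition RC :: "'e \<Rightarrow> ('v,'e) vec \<Rightarrow> ('v,'e) vec" where
  "RC e y = Jop mu s t opp (ell s t e (Jop mu s t opp y))"
definition RR :: "'e \<Rightarrow> ('v,'e) vec \<Rightarrow> ('v,'e) vec" where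
  "RR e y = Jop mu s t opp (X_dir mu s t opp e (Jop mu s t opp y))"

lemma RR_V: "in_H s t y \<Longrightarrow> RR e y (V g) = (if g = s e then inverse (A e) * kk e * y (P [e]) else 0)"
  unfolding RR_def by (simp add: R_eq RC_V RA_V inH_fin)
lemma RR_P: "in_H s t y \<Longrightarrow> RR e y (P ys) = A e * RC e y (P ys) + (if ys \<noteq> [] then inverse (A e) * kk e * y (P (ys @ [e])) else 0)"
  unfolding RR_def RC_def by (simp add: R_eq RA_P)
lemma RC_snoc': "in_H s t y \<Longrightarrow> RC e y (P (bl @ [g])) =
    (if g = opp e then (if bl = [] then kk e * y (V (t e)) else if t e = t (last bl) then kk e * y (P bl) else 0) else 0)"
  unfolding RC_def by (rule RC_snoc[OF inH_fin])
lemma RC_Nil': "in_H s t y \<Longrightarrow> RC e y (P []) = 0"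
  unfolding RC_def by (rule RC_Nil[OF inH_fin])
lemma finRR: "in_H s t y \<Longrightarrow> finite (supp (RR e y))"
  unfolding RR_def by (rule fin_R[OF inH_fin])

lemma main_comm: assumes h: "in_H s t x"
  shows "ell s t e (RR e' x) c - RR e' (ell s t e x) c
     = (if e' = e \<and> c = V (s e) then - inverse (A e) * kk e * x (V (t e)) else 0)"
proof -
  have f: "finite (supp x)" by (rule inH_fin[OF h])
  have he: "in_H s t (ell s t e x)" by (rule inH_ell[OF h])
  have fR: "finite (supp (RR e' x))" by (rule finRR[OF h])
  show ?thesis
  proof (cases c)
    case (V g) then show ?thesis by (simp add: ell_V fR RR_V he ell_Cons f)
  next
    case (P ys)
    show ?thesis
    proof (cases ys)
      case Nil then show ?thesis using P by (simp add: ell_Nil fR RR_P he RC_Nil')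
    next
      case (Cons g es)
      show ?thesis
      proof (cases "g = e")
        case False
        have 1: "ell s t e (RR e' x) (P (g # es)) = 0" using False by (simp add: ell_Cons fR)
        have 2: "RC e' (ell s t e x) (P (g # es)) = 0"
        proof (cases es rule: rev_cases)
          case Nil then show ?thesis using RC_snoc'[OF he, of e' "[]" g] by (simp add: ell_V f)
        next
          case (snoc bs h2)
          then show ?thesis using RC_snoc'[OF he, of e' "g # bs" h2] False by (simp add: ell_Cons f)
        qed
        have 3: "ell s t e x (P (g # es @ [e'])) = 0" using False by (simp add: ell_Cons f)
        show ?thesis using P Cons 1 2 3 by (simp add: RR_P he)
      next
        case True
        show ?thesis
        proof (cases es rule: rev_cases)
          case Nil
          have 1: "ell s t e (RR e' x) (P [e]) = RR e' x (V (t e))" by (simp add: ell_Cons fR)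
          have 2: "RC e' (ell s t e x) (P [e]) = 0" using RC_snoc'[OF he, of e' "[]" e] by (simp add: ell_V f)
          have 3: "ell s t e x (P [e, e']) = (if t e = s e' then x (P [e']) else 0)" by (simp add: ell_Cons f)
          show ?thesis using P Cons True Nil 1 2 3 by (simp add: RR_P RR_V h he)
        next
          case (snoc bs h2)
          have 1: "ell s t e (RR e' x) (P (e # es)) = (if t e = s (hd es) then RR e' x (P es) else 0)"
            using snoc by (simp add: ell_Cons fR)
          have 3: "ell s t e x (P (e # es @ [e'])) = (if t e = s (hd es) then x (P (es @ [e'])) else 0)"
            using snoc by (cases bs) (simp_all add: ell_Cons f)
          have 2: "RC e' (ell s t e x) (P (e # es)) = (if t e = s (hd es) then RC e' x (P es) else 0)"
          proof (cases bs)
            case Nil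
            have a: "RC e' (ell s t e x) (P (e # es)) = (if h2 = opp e' then (if t e' = t e then kk e' * x (V (t e)) else 0) else 0)"
              using RC_snoc'[OF he, of e' "[e]" h2] snoc Nil by (simp add: ell_V ell_Cons f)
            have b: "RC e' x (P es) = (if h2 = opp e' then kk e' * x (V (t e')) else 0)"
              using RC_snoc'[OF h, of e' "[]" h2] snoc Nil by simp
            show ?thesis unfolding a b using snoc Nil by (auto simp: opp_s)
          next
            case (Cons b0 bs0)
            have a: "RC e' (ell s t e x) (P (e # es)) = (if h2 = opp e' then (if t e' = t (last bs) then kk e' * (if t e = s (hd bs) then x (P bs) else 0) else 0) else 0)"
              using RC_snoc'[OF he, of e' "e # bs" h2] snoc Cons by (simp add: ell_Cons f)
            have b: "RC e' x (P es) = (if h2 = opp e' then (if t e' = t (last bs) then kk e' * x (P bs) else 0) else 0)"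
              using RC_snoc'[OF h, of e' bs h2] snoc Cons by simp
            show ?thesis unfolding a b using snoc Cons by auto
          qed
          show ?thesis using P Cons True snoc 1 2 3 by (simp add: RR_P h he)
        qed
      qed
    qed
  qed
qed

end
theorem lemma3p4:
  fixes s t :: "'e::finite \<Rightarrow> 'v::finite" and opp :: "'e \<Rightarrow> 'e" and mu :: "'v \<Rightarrow> real"
  assumes opp_inv: "\<And>e. opp (opp e) = e"
    and opp_s: "\<And>e. s (opp e) = t e" and opp_t: "\<And>e. t (opp e) = s e"
    and opp_fix: "\<And>e. opp e = e \<longleftrightarrow> s e = t e"
    and conn: "\<And>u v. (u, v) \<in> (range (\<lambda>e. (s e, t e)))\<^sup>*"
    and mu_pos: "\<And>v. mu v > 0"
  shows "(\<forall>e x. in_H s t x \<longrightarrow>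
            commutator (ell s t e) (Jop mu s t opp \<circ> X_dir mu s t opp e \<circ> Jop mu s t opp) x
            = (\<lambda>c. - complex_of_real (1 / ((mu (s e) ^ 3 * mu (t e)) powr (1/4)))
                   * rank_one mu t (bv (V (s e))) (bv (V (t e))) x c)) \<and>
         (\<forall>e e' x. e' \<noteq> e \<longrightarrow> in_H s t x \<longrightarrow>
            commutator (ell s t e) (Jop mu s t opp \<circ> X_dir mu s t opp e' \<circ> Jop mu s t opp) x = (\<lambda>_. 0))"
  proof -
  interpret G s t opp mu using assms by unfold_locales
  have hin: "\<And>e x. hinner mu t (bv (V (t e))) x = x (V (t e)) * complex_of_real (mu (t e))"
  proof -
    fix e and x :: "('v,'e) vec"
    have "{b. bv (V (t e)) b \<noteq> (0::complex)} = {V (t e)}" by (auto simp: bv_def)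
    then show "hinner mu t (bv (V (t e))) x = x (V (t e)) * complex_of_real (mu (t e))"
      by (simp add: hinner_def bv_def)
  qed
  have cf: "\<And>e. inverse (A e) * kk e = complex_of_real (1 / ((mu (s e) ^ 3 * mu (t e)) powr (1/4))) * complex_of_real (mu (t e))"
  proof -
    fix e
    have "inverse (a_coef mu s t e) * sqrt (mu (t e) / mu (s e)) = mu (t e) * (1 / ((mu (s e) ^ 3 * mu (t e)) powr (1/4)))"
      unfolding a_coef_def by (rule coef_real[OF mu_pos mu_pos])
    then show "inverse (A e) * kk e = complex_of_real (1 / ((mu (s e) ^ 3 * mu (t e)) powr (1/4))) * complex_of_real (mu (t e))"
      unfolding A_def kk_def by (metis mult.commute of_real_inverse of_real_mult)
  qed
  show ?thesis
  proof (intro conjI allI impI)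
    fix e :: 'e and x :: "('v,'e) vec" assume h: "in_H s t x"
    show "commutator (ell s t e) (Jop mu s t opp \<circ> X_dir mu s t opp e \<circ> Jop mu s t opp) x
            = (\<lambda>c. - complex_of_real (1 / ((mu (s e) ^ 3 * mu (t e)) powr (1/4)))
                   * rank_one mu t (bv (V (s e))) (bv (V (t e))) x c)"
    proof
      fix c
      show "commutator (ell s t e) (Jop mu s t opp \<circ> X_dir mu s t opp e \<circ> Jop mu s t opp) x c =
         - complex_of_real (1 / ((mu (s e) ^ 3 * mu (t e)) powr (1/4))) * rank_one mu t (bv (V (s e))) (bv (V (t e))) x c"
        unfolding commutator_def o_def RR_def[symmetric] main_comm[OF h] rank_one_def hin
        using cf[of e] by (auto simp: bv_def)
    qed
  next
    fix e e' :: 'e and x :: "('v,'e) vec" assume ne: "e' \<noteq> e" and h: "in_H s t x"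
    show "commutator (ell s t e) (Jop mu s t opp \<circ> X_dir mu s t opp e' \<circ> Jop mu s t opp) x = (\<lambda>_. 0)"
      unfolding commutator_def o_def RR_def[symmetric] main_comm[OF h] using ne by simp
  qed
qed

end
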